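(* Let $M$ be a real representable (loopless) matroid. Then $M$ is strictly uniformly dense if and only if $M$ has a representation $X$ such that the measure $\mu_X$ on the bases defined by $\mu_X(B)=\det(X_B)^2$ satisfies: $\mu_X(\{B: B\ni e\})$ is the same for all $e\in E$.
   Context: A matroid $M$ on ground set $E$ ($|E|=n$) of rank $k$ is real representable if there is a real full-rank $k\times n$ matrix $X$ (a representation) with columns indexed by $E$ such that a $k$-subset $B$ is a basis iff $\det(X_B)\ne0$, $X_B$ the submatrix on columns $B$. Density $\rho=|E|/k$. $M$ is strictly uniformly dense if $(\rho^{-1},\dots,\rho^{-1})$ lies in the relative interior of the base polytope (convex hull of basis indicator vectors); equivalently there is a measure $\mu$ with $\mu(B)>0$ for every basis such that $\mu(\{B:B\ni e\})$ is independent of $e\in E$. *)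

theory Defs
  imports "HOL-Analysis.Analysis"
begin

text \<open>Ground set E = UNIV :: 'e set (finite type), rank k = CARD('k).
  A matroid is given by its set of bases. A representation is a real
  k x n matrix X :: real^'e^'k (rows indexed by 'k, columns by 'e).\<close>

definition col_submatrix :: "real^'e^'k \<Rightarrow> ('k \<Rightarrow> 'e) \<Rightarrow> real^'k^'k" where
  "col_submatrix X f = (\<chi> i j. X $ i $ (f j))"

text \<open>det(X_B): determinant of the k x k submatrix on the columns B, the columns
  listed via a fixed (chosen) bijection from 'k onto B; it is well defined up to sign,
  which is irrelevant for whether it vanishes and for its square.\<close>
definition detB :: "real^'e^'k \<Rightarrow> 'e set \<Rightarrow> real" where
  "detB X B = det (col_submatrix X (SOME f. bij_betw f (UNIV :: 'k set) B))"

definition is_representation :: "real^'e^'k \<Rightarrow> 'e set set \<Rightarrow> bool" where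
  "is_representation X bases \<longleftrightarrow>
     rank X = CARD('k) \<and>
     (\<forall>B. card B = CARD('k) \<longrightarrow> (B \<in> bases \<longleftrightarrow> detB X B \<noteq> 0))"

definition real_representable :: "'k::finite itself \<Rightarrow> 'e::finite set set \<Rightarrow> bool" where
  "real_representable _ bases \<longleftrightarrow> (\<exists>X :: real^'e^'k. is_representation X bases)"

definition loopless :: "'e set set \<Rightarrow> bool" where
  "loopless bases \<longleftrightarrow> (\<forall>e. \<exists>B\<in>bases. e \<in> B)"

definition indvec :: "'e::finite set \<Rightarrow> real^'e" where
  "indvec B = (\<chi> e. if e \<in> B then 1 else 0)"

definition base_polytope :: "'e::finite set set \<Rightarrow> (real^'e) set" where
  "base_polytope bases = convex hull (indvec ` bases)"

text \<open>Strictly uniformly dense, for a matroid of rank k: (1/rho,...,1/rho), rho = n/k,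
  lies in the relative interior of the base polytope.\<close>
definition strictly_uniformly_dense :: "nat \<Rightarrow> 'e::finite set set \<Rightarrow> bool" where
  "strictly_uniformly_dense k bases \<longleftrightarrow>
     (\<chi> e. real k / real CARD('e)) \<in> rel_interior (base_polytope bases)"

end

theory Submission
  imports Defs
begin


definition scalecols :: "real^'e^'k \<Rightarrow> ('e \<Rightarrow> real) \<Rightarrow> real^'e^'k" where
  "scalecols X s = (\<chi> i j. X$i$j * s j)"

lemma det_col_scale:
  fixes X :: "real^'e^'k" and f :: "'k \<Rightarrow> 'e"
  shows "det (col_submatrix (scalecols X s) f) = det (col_submatrix X f) * (\<Prod>j\<in>UNIV. s (f j))"
proof -
  have "transpose (col_submatrix (scalecols X s) f) =
        (\<chi> j. s (f j) *s (transpose (col_submatrix X f))$j)"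
    by (simp add: transpose_def col_submatrix_def scalecols_def vec_eq_iff mult.commute)
  then have "det (col_submatrix (scalecols X s) f) = det (\<chi> j. s (f j) *s (transpose (col_submatrix X f))$j)"
    by (metis det_transpose)
  also have "\<dots> = (\<Prod>j\<in>UNIV. s (f j)) * det (\<chi> j. (transpose (col_submatrix X f))$j)"
    by (rule det_rows_mul)
  also have "(\<chi> j. (transpose (col_submatrix X f))$j) = transpose (col_submatrix X f)"
    by (simp add: vec_eq_iff)
  finally show ?thesis by (simp add: mult.commute)
qed

lemma detB_scale:
  fixes X :: "real^'e::finite^'k::finite"
  assumes "card B = CARD('k)"
  shows "detB (scalecols X s) B = detB X B * (\<Prod>e\<in>B. s e)"
proof -
  have "\<exists>h. bij_betw h (UNIV::'k set) B"
    by (rule finite_same_card_bij) (use assms in auto)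
  then have b: "bij_betw (SOME f. bij_betw f (UNIV :: 'k set) B) UNIV B"
    by (rule someI_ex)
  show ?thesis
    unfolding detB_def det_col_scale prod.reindex_bij_betw[OF b] ..
qed

lemma rank_scale:
  fixes X :: "real^'e::finite^'k::finite"
  shows "rank (scalecols X s) \<le> rank X"
proof -
  define D :: "real^'e^'e" where "D = (\<chi> i j. if i = j then s j else 0)"
  have Dc: "D $ k $ j = (if k = j then s j else 0)" for k j by (simp add: D_def)
  have "(X ** D) $ i $ j = (scalecols X s) $ i $ j" for i j
  proof -
    have "(X ** D) $ i $ j = (\<Sum>k\<in>UNIV. X$i$k * D$k$j)"
      by (simp add: matrix_matrix_mult_def)
    also have "\<dots> = (\<Sum>k\<in>UNIV. if k = j then X$i$k * s j else 0)"
      by (intro sum.cong refl) (simp add: Dc)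
    also have "\<dots> = X$i$j * s j" by (simp add: sum.delta)
    finally show ?thesis by (simp add: scalecols_def)
  qed
  then have "scalecols X s = X ** D" by (simp add: vec_eq_iff)
  then show ?thesis by (metis rank_mul_le_left)
qed

lemma rank_scale_eq:
  fixes X :: "real^'e::finite^'k::finite"
  assumes "\<And>e. s e \<noteq> 0"
  shows "rank (scalecols X s) = rank X"
proof -
  have "(scalecols (scalecols X s) (\<lambda>e. 1 / s e)) $ i $ j = X $ i $ j" for i j
    using assms[of j] by (simp add: scalecols_def)
  then have "scalecols (scalecols X s) (\<lambda>e. 1 / s e) = X" by (simp add: vec_eq_iff)
  then show ?thesis using rank_scale[of X s] rank_scale[of "scalecols X s" "\<lambda>e. 1 / s e"] by simp
qed

lemma moment_exists:
  fixes v :: "'i \<Rightarrow> 'a::euclidean_space" and w c :: "'i \<Rightarrow> real" and p :: 'a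
  assumes fin: "finite I" and ne: "I \<noteq> {}" and wpos: "\<forall>i\<in>I. w i > 0"
    and cpos: "\<forall>i\<in>I. c i > 0" and csum: "sum c I = 1"
    and pdef: "p = (\<Sum>i\<in>I. c i *\<^sub>R v i)"
  shows "\<exists>y. \<forall>b. (\<Sum>i\<in>I. w i * exp (v i \<bullet> y) * (v i \<bullet> b)) = (p \<bullet> b) * (\<Sum>i\<in>I. w i * exp (v i \<bullet> y))"
proof -
  define a where "a i = v i - p" for i
  define F where "F y = (\<Sum>i\<in>I. w i * exp (a i \<bullet> y))" for y
  have asum: "(\<Sum>i\<in>I. c i *\<^sub>R a i) = 0"
  proof -
    have "(\<Sum>i\<in>I. c i *\<^sub>R a i) = (\<Sum>i\<in>I. c i *\<^sub>R v i) - (\<Sum>i\<in>I. c i *\<^sub>R p)"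
      unfolding a_def scaleR_diff_right by (rule sum_subtractf)
    also have "(\<Sum>i\<in>I. c i *\<^sub>R p) = p"
      by (metis csum scaleR_left.sum scaleR_one)
    finally show ?thesis using pdef by simp
  qed
  have A: "\<forall>i\<in>I. a i \<bullet> u = 0" if "\<forall>i\<in>I. a i \<bullet> u \<le> 0" for u
  proof -
    have "(\<Sum>i\<in>I. c i * (a i \<bullet> u)) = 0"
      using arg_cong[OF asum, of "\<lambda>x. x \<bullet> u"] by (simp add: inner_sum_left)
    then have "(\<Sum>i\<in>I. - (c i * (a i \<bullet> u))) = 0" by (simp add: sum_negf)
    moreover have "\<forall>i\<in>I. 0 \<le> - (c i * (a i \<bullet> u))"
      using that cpos by (simp add: mult_nonneg_nonpos less_imp_le)
    ultimately have "\<forall>i\<in>I. - (c i * (a i \<bullet> u)) = 0"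
      by (simp add: sum_nonneg_eq_0_iff[OF fin])
    then show ?thesis using cpos by force
  qed
  define L where "L = span (a ` I)"
  define \<phi> where "\<phi> u = (\<Sum>i\<in>I. max 0 (a i \<bullet> u))" for u
  have \<phi>cont: "continuous_on S \<phi>" for S
    unfolding \<phi>_def by (intro continuous_intros)
  have \<phi>hom: "\<phi> (r *\<^sub>R u) = r * \<phi> u" if "r > 0" for r u
    unfolding \<phi>_def sum_distrib_left using that
    by (intro sum.cong) (auto simp: max_def mult_le_0_iff zero_le_mult_iff)
  have \<phi>nn: "\<phi> u \<ge> 0" for u unfolding \<phi>_def by (intro sum_nonneg) auto
  have B: "\<exists>\<delta>>0. \<forall>u\<in>L. \<delta> * norm u \<le> \<phi> u"
  proof (cases "L \<inter> sphere 0 1 = {}")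
    case True
    have "u = 0" if "u \<in> L" for u
    proof (rule ccontr)
      assume "u \<noteq> 0"
      then have "(1 / norm u) *\<^sub>R u \<in> L \<inter> sphere 0 1"
        using that unfolding L_def by (auto intro: span_mul)
      then show False using True by blast
    qed
    then show ?thesis using \<phi>nn by (intro exI[of _ 1]) force
  next
    case False
    have "compact (L \<inter> sphere 0 1)"
      unfolding L_def by (intro closed_Int_compact closed_span compact_sphere)
    then obtain u0 where u0: "u0 \<in> L \<inter> sphere 0 1" and u0min: "\<forall>u\<in>L \<inter> sphere 0 1. \<phi> u0 \<le> \<phi> u"
      using continuous_attains_inf[OF _ False \<phi>cont] by blast
    have "\<phi> u0 > 0"
    proof (rule ccontr)
      assume "\<not> \<phi> u0 > 0"
      then have "\<phi> u0 = 0" using \<phi>nn[of u0] by simp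
      then have "\<forall>i\<in>I. max 0 (a i \<bullet> u0) = 0"
        unfolding \<phi>_def by (subst (asm) sum_nonneg_eq_0_iff[OF fin]) auto
      then have "\<forall>i\<in>I. a i \<bullet> u0 \<le> 0" by (metis max.cobounded2)
      then have "\<forall>i\<in>I. a i \<bullet> u0 = 0" using A by blast
      then have "orthogonal u0 u0"
        using u0 unfolding L_def by (intro orthogonal_to_span[of u0 "a ` I"]) (auto simp: orthogonal_def inner_commute)
      then have "u0 \<bullet> u0 = 0" by (simp add: orthogonal_def)
      then show False using u0 by simp
    qed
    moreover have "\<phi> u0 * norm u \<le> \<phi> u" if "u \<in> L" for u
    proof (cases "u = 0")
      case True then show ?thesis by (simp add: \<phi>nn)
    next
      case False
      then have "(1 / norm u) *\<^sub>R u \<in> L \<inter> sphere 0 1"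
        using that unfolding L_def by (auto intro: span_mul)
      then have "\<phi> u0 \<le> \<phi> ((1 / norm u) *\<^sub>R u)" using u0min by blast
      also have "\<dots> = \<phi> u / norm u" using \<phi>hom[of "1 / norm u" u] False by simp
      finally show ?thesis using False by (simp add: field_simps)
    qed
    ultimately show ?thesis by blast
  qed
  then obtain \<delta> where \<delta>: "\<delta> > 0" "\<forall>u\<in>L. \<delta> * norm u \<le> \<phi> u" by blast
  define N where "N = real (card I)"
  have Npos: "N > 0" using fin ne by (simp add: N_def card_gt_0_iff)
  define wm where "wm = Min (w ` I)"
  have wm: "wm > 0" "\<forall>i\<in>I. wm \<le> w i"
    using fin ne wpos by (auto simp: wm_def)
  have Fnn: "F y \<ge> 0" for y
    unfolding F_def using wpos by (intro sum_nonneg) (auto intro: less_imp_le)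
  define R where "R = F 0 * N / (wm * \<delta>)"
  have Rnn: "R \<ge> 0" unfolding R_def using Fnn[of 0] Npos wm \<delta> by simp
  have C: "F 0 < F y" if y: "y \<in> L" "norm y > R" for y
  proof -
    have phy: "\<delta> * norm y \<le> \<phi> y" using \<delta> y by blast
    obtain i where i: "i \<in> I" "\<phi> y / N \<le> max 0 (a i \<bullet> y)"
    proof (rule ccontr)
      assume "\<not> thesis"
      then have "\<forall>i\<in>I. max 0 (a i \<bullet> y) < \<phi> y / N" using that by force
      then have "\<phi> y < (\<Sum>i\<in>I. \<phi> y / N)"
        unfolding \<phi>_def by (intro sum_strict_mono[OF fin ne]) (auto simp: \<phi>_def)
      also have "\<dots> = \<phi> y" using Npos by (simp add: N_def)
      finally show False by simp
    qed
    have "\<delta> * R / N < \<delta> * norm y / N"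
      using y \<delta> Npos by (simp add: divide_strict_right_mono)
    also have "\<dots> \<le> \<phi> y / N" using phy Npos by (simp add: divide_right_mono)
    finally have lt: "\<delta> * R / N < max 0 (a i \<bullet> y)" using i by linarith
    have "0 \<le> \<delta> * R / N" using \<delta> Rnn Npos by simp
    then have aiy: "max 0 (a i \<bullet> y) = a i \<bullet> y" using lt by (simp add: max_def split: if_splits)
    have "F 0 = wm * (\<delta> * R / N)"
      unfolding R_def using wm \<delta> Npos by (simp add: field_simps)
    also have "\<dots> < wm * (1 + a i \<bullet> y)"
      using lt aiy wm by (intro mult_strict_left_mono) auto
    also have "\<dots> \<le> w i * exp (a i \<bullet> y)"
    proof (rule mult_mono)
      show "wm \<le> w i" using wm i by blast
      show "1 + a i \<bullet> y \<le> exp (a i \<bullet> y)" by (rule exp_ge_add_one_self)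
    qed (use wpos i lt aiy \<open>0 \<le> \<delta> * R / N\<close> in auto)
    also have "\<dots> \<le> F y"
      unfolding F_def using wpos i fin
      by (intro member_le_sum[of i I "\<lambda>i. w i * exp (a i \<bullet> y)"]) (auto intro: less_imp_le)
    finally show ?thesis .
  qed
  have Fcont: "continuous_on S F" for S unfolding F_def by (intro continuous_intros)
  have "compact (L \<inter> cball 0 R)"
    unfolding L_def by (intro closed_Int_compact closed_span compact_cball)
  moreover have "0 \<in> L \<inter> cball 0 R" using Rnn by (auto simp: L_def span_zero)
  ultimately obtain ys where ys: "ys \<in> L \<inter> cball 0 R" and ysmin: "\<forall>y\<in>L \<inter> cball 0 R. F ys \<le> F y"
    using continuous_attains_inf[OF _ _ Fcont] by blast
  have D: "F ys \<le> F y" for y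
  proof -
    obtain yl z where yl: "yl \<in> span (a ` I)" and z: "\<And>u. u \<in> span (a ` I) \<Longrightarrow> orthogonal z u"
      and yeq: "y = yl + z"
      using orthogonal_subspace_decomp_exists[of "a ` I" y] by metis
    have "a i \<bullet> z = 0" if "i \<in> I" for i
      using z[of "a i"] that by (auto simp: span_base orthogonal_def inner_commute)
    then have "F y = F yl" unfolding F_def yeq by (intro sum.cong) (auto simp: inner_add_right)
    moreover have "F ys \<le> F yl"
    proof (cases "norm yl \<le> R")
      case True then show ?thesis using ysmin yl by (auto simp: L_def)
    next
      case False
      then have "F 0 < F yl" using C yl by (auto simp: L_def)
      moreover have "F ys \<le> F 0" using ysmin \<open>0 \<in> L \<inter> cball 0 R\<close> by blast
      ultimately show ?thesis by simp
    qed
    ultimately show ?thesis by simp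
  qed
  have E: "(\<Sum>i\<in>I. w i * (exp (a i \<bullet> ys) * (a i \<bullet> b))) = 0" for b
  proof -
    define g where "g t = (\<Sum>i\<in>I. w i * exp (a i \<bullet> ys + t * (a i \<bullet> b)))" for t
    have geq: "g t = F (ys + t *\<^sub>R b)" for t
      unfolding g_def F_def by (simp add: inner_add_right)
    have "DERIV g 0 :> (\<Sum>i\<in>I. w i * (exp (a i \<bullet> ys) * (a i \<bullet> b)))"
      unfolding g_def by (auto intro!: derivative_eq_intros sum.cong simp: mult.commute mult.left_commute)
    moreover have "\<forall>t. \<bar>0 - t\<bar> < 1 \<longrightarrow> g 0 \<le> g t"
      using D by (simp add: geq)
    ultimately show ?thesis using DERIV_local_min[where d=1] by (metis zero_less_one)
  qed
  show ?thesis
  proof (intro exI allI)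
    fix b
    define E where "E = exp (- (p \<bullet> ys))"
    have Epos: "E > 0" by (simp add: E_def)
    have "0 = (\<Sum>i\<in>I. w i * (exp (a i \<bullet> ys) * (a i \<bullet> b)))" using E by simp
    also have "\<dots> = (\<Sum>i\<in>I. E * (w i * exp (v i \<bullet> ys) * (v i \<bullet> b)) - E * (p \<bullet> b) * (w i * exp (v i \<bullet> ys)))"
      unfolding a_def E_def by (intro sum.cong refl) (simp add: inner_diff_left exp_diff algebra_simps exp_minus field_simps)
    also have "\<dots> = E * ((\<Sum>i\<in>I. w i * exp (v i \<bullet> ys) * (v i \<bullet> b)) - (p \<bullet> b) * (\<Sum>i\<in>I. w i * exp (v i \<bullet> ys)))"
      by (simp add: sum_subtractf sum_distrib_left algebra_simps)
    finally show "(\<Sum>i\<in>I. w i * exp (v i \<bullet> ys) * (v i \<bullet> b)) = (p \<bullet> b) * (\<Sum>i\<in>I. w i * exp (v i \<bullet> ys))"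
      using Epos by simp
  qed
qed

lemma relint_base:
  fixes bases :: "('e::finite) set set"
  shows "rel_interior (base_polytope bases) =
    {\<Sum>B\<in>bases. c B *\<^sub>R indvec B | c. (\<forall>B\<in>bases. c B > 0) \<and> sum c bases = 1}"
proof -
  have eq: "indvec ` bases = \<Union>((\<lambda>B. {indvec B}) ` bases)" by auto
  have "rel_interior (base_polytope bases) =
    {sum (\<lambda>i. c i *\<^sub>R s i) bases | c s. (\<forall>i\<in>bases. c i > 0) \<and> sum c bases = 1 \<and>
      (\<forall>i\<in>bases. s i \<in> rel_interior {indvec i})}"
    unfolding base_polytope_def eq by (rule rel_interior_convex_hull_union) auto
  also have "\<dots> = {\<Sum>B\<in>bases. c B *\<^sub>R indvec B | c. (\<forall>B\<in>bases. c B > 0) \<and> sum c bases = 1}"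
  proof (rule set_eqI, rule iffI)
    fix x assume "x \<in> {sum (\<lambda>i. c i *\<^sub>R s i) bases | c s. (\<forall>i\<in>bases. c i > 0) \<and> sum c bases = 1 \<and>
      (\<forall>i\<in>bases. s i \<in> rel_interior {indvec i})}"
    then obtain c s where "x = sum (\<lambda>i. c i *\<^sub>R s i) bases" "\<forall>i\<in>bases. c i > 0" "sum c bases = 1"
      "\<forall>i\<in>bases. s i = indvec i" by (auto simp: rel_interior_sing)
    then show "x \<in> {\<Sum>B\<in>bases. c B *\<^sub>R indvec B | c. (\<forall>B\<in>bases. c B > 0) \<and> sum c bases = 1}"
      by (auto intro!: exI[of _ c] sum.cong)
  next
    fix x assume "x \<in> {\<Sum>B\<in>bases. c B *\<^sub>R indvec B | c. (\<forall>B\<in>bases. c B > 0) \<and> sum c bases = 1}"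
    then show "x \<in> {sum (\<lambda>i. c i *\<^sub>R s i) bases | c s. (\<forall>i\<in>bases. c i > 0) \<and> sum c bases = 1 \<and>
      (\<forall>i\<in>bases. s i \<in> rel_interior {indvec i})}"
      by (auto simp: rel_interior_sing)
  qed
  finally show ?thesis .
qed

lemma indvec_inner: "indvec B \<bullet> y = (\<Sum>e\<in>B. y $ e)"
proof -
  have "indvec B \<bullet> y = (\<Sum>e\<in>UNIV. if e \<in> B then y $ e else 0)"
    unfolding inner_vec_def indvec_def by (intro sum.cong) auto
  also have "\<dots> = (\<Sum>e\<in>UNIV \<inter> B. y $ e)"
    by (rule sum.inter_restrict[symmetric]) simp
  finally show ?thesis by simp
qed

lemma indvec_axis: "indvec B \<bullet> axis j 1 = (if j \<in> B then 1 else 0)"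
  by (simp add: inner_axis indvec_def)

theorem theorem4p6:
  fixes bases :: "('e::finite) set set"
  assumes rank_k: "\<forall>B\<in>bases. card B = CARD('k::finite)"
    and repr: "real_representable TYPE('k) bases"
    and "loopless bases"
  shows "strictly_uniformly_dense CARD('k) bases \<longleftrightarrow>
    (\<exists>X :: real^'e^'k. is_representation X bases \<and>
       (\<exists>c. \<forall>e. (\<Sum>B\<in>{B\<in>bases. e \<in> B}. (detB X B)\<^sup>2) = c))"
proof -
  have finB: "finite bases" by (rule finite_subset[OF subset_UNIV]) simp
  obtain B0 where B0: "B0 \<in> bases" using assms(3) unfolding loopless_def by blast
  have npos: "real CARD('e) > 0" by simp
  define p :: "real^'e" where "p = (\<chi> e. real CARD('k) / real CARD('e))"
  have sud: "strictly_uniformly_dense CARD('k) bases \<longleftrightarrow>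
     (\<exists>c. (\<forall>B\<in>bases. c B > 0) \<and> sum c bases = 1 \<and> p = (\<Sum>B\<in>bases. c B *\<^sub>R indvec B))"
    unfolding strictly_uniformly_dense_def relint_base p_def by blast
  show ?thesis
  proof
    assume "strictly_uniformly_dense CARD('k) bases"
    then obtain c where cpos: "\<forall>B\<in>bases. c B > 0" and csum: "sum c bases = 1"
      and pdef: "p = (\<Sum>B\<in>bases. c B *\<^sub>R indvec B)" using sud by blast
    obtain X :: "real^'e^'k" where repX: "is_representation X bases"
      using repr unfolding real_representable_def by blast
    define w where "w B = (detB X B)\<^sup>2" for B
    have wpos: "\<forall>B\<in>bases. w B > 0"
      using repX rank_k unfolding is_representation_def w_def by auto
    obtain y where y: "\<forall>b. (\<Sum>B\<in>bases. w B * exp (indvec B \<bullet> y) * (indvec B \<bullet> b)) =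
        (p \<bullet> b) * (\<Sum>B\<in>bases. w B * exp (indvec B \<bullet> y))"
      using moment_exists[OF finB _ wpos cpos csum pdef] B0 by blast
    define s where "s e = exp (y $ e / 2)" for e
    define X' where "X' = scalecols X s"
    have key: "(detB X' B)\<^sup>2 = w B * exp (indvec B \<bullet> y)" if "card B = CARD('k)" for B
    proof -
      have "(\<Prod>e\<in>B. s e)\<^sup>2 = (\<Prod>e\<in>B. exp (y $ e))"
        unfolding power2_eq_square prod.distrib[symmetric] s_def
        by (intro prod.cong refl) (simp flip: exp_add)
      also have "\<dots> = exp (indvec B \<bullet> y)"
        unfolding indvec_inner by (simp add: exp_sum)
      finally show ?thesis
        unfolding X'_def detB_scale[OF that] w_def by (simp add: power_mult_distrib)
    qed
    have "is_representation X' bases"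
    proof -
      have "rank X' = rank X" unfolding X'_def by (rule rank_scale_eq) (simp add: s_def)
      moreover have "detB X' B \<noteq> 0 \<longleftrightarrow> detB X B \<noteq> 0" if "card B = CARD('k)" for B
        unfolding X'_def detB_scale[OF that] by (simp add: s_def)
      ultimately show ?thesis using repX unfolding is_representation_def by simp
    qed
    moreover have "\<exists>cc. \<forall>e. (\<Sum>B\<in>{B\<in>bases. e \<in> B}. (detB X' B)\<^sup>2) = cc"
    proof (intro exI allI)
      fix e
      have "(\<Sum>B\<in>{B\<in>bases. e \<in> B}. (detB X' B)\<^sup>2) =
            (\<Sum>B\<in>bases. if e \<in> B then (detB X' B)\<^sup>2 else 0)"
        by (rule sum.inter_filter[OF finB])
      also have "\<dots> = (\<Sum>B\<in>bases. w B * exp (indvec B \<bullet> y) * (indvec B \<bullet> axis e 1))"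
        using rank_k by (intro sum.cong refl) (simp add: key indvec_axis)
      also have "\<dots> = (real CARD('k) / real CARD('e)) * (\<Sum>B\<in>bases. w B * exp (indvec B \<bullet> y))"
        using y[rule_format, of "axis e 1"] by (simp add: p_def inner_axis)
      finally show "(\<Sum>B\<in>{B\<in>bases. e \<in> B}. (detB X' B)\<^sup>2) =
          (real CARD('k) / real CARD('e)) * (\<Sum>B\<in>bases. w B * exp (indvec B \<bullet> y))" .
    qed
    ultimately show "\<exists>X :: real^'e^'k. is_representation X bases \<and>
       (\<exists>c. \<forall>e. (\<Sum>B\<in>{B\<in>bases. e \<in> B}. (detB X B)\<^sup>2) = c)" by blast
  next
    assume "\<exists>X :: real^'e^'k. is_representation X bases \<and>
       (\<exists>c. \<forall>e. (\<Sum>B\<in>{B\<in>bases. e \<in> B}. (detB X B)\<^sup>2) = c)"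
    then obtain X :: "real^'e^'k" and cst where repX: "is_representation X bases"
      and cst: "\<forall>e. (\<Sum>B\<in>{B\<in>bases. e \<in> B}. (detB X B)\<^sup>2) = cst" by blast
    define \<mu> where "\<mu> B = (detB X B)\<^sup>2" for B
    have \<mu>pos: "\<forall>B\<in>bases. \<mu> B > 0"
      using repX rank_k unfolding is_representation_def \<mu>_def by auto
    define Z where "Z = sum \<mu> bases"
    have Zpos: "Z > 0" unfolding Z_def using \<mu>pos B0 finB
      by (metis empty_iff sum_pos)
    have marg: "(\<Sum>B\<in>bases. if e \<in> B then \<mu> B else 0) = cst" for e
      using cst[rule_format, of e] sum.inter_filter[OF finB, of "\<lambda>B. (detB X B)\<^sup>2" "\<lambda>B. e \<in> B"]
      unfolding \<mu>_def by simp
    have "real CARD('e) * cst = (\<Sum>e\<in>UNIV. \<Sum>B\<in>bases. if e \<in> B then \<mu> B else 0)"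
      by (simp add: marg)
    also have "\<dots> = (\<Sum>B\<in>bases. \<Sum>e\<in>UNIV. if e \<in> B then \<mu> B else 0)"
      by (rule sum.swap)
    also have "\<dots> = (\<Sum>B\<in>bases. real CARD('k) * \<mu> B)"
    proof (intro sum.cong refl)
      fix B assume "B \<in> bases"
      have "(\<Sum>e\<in>UNIV. if e \<in> B then \<mu> B else 0) = (\<Sum>e\<in>UNIV \<inter> B. \<mu> B)"
        by (rule sum.inter_restrict[symmetric]) simp
      then show "(\<Sum>e\<in>UNIV. if e \<in> B then \<mu> B else 0) = real CARD('k) * \<mu> B"
        using rank_k \<open>B \<in> bases\<close> by simp
    qed
    also have "\<dots> = real CARD('k) * Z" by (simp add: Z_def sum_distrib_left)
    finally have ncst: "real CARD('e) * cst = real CARD('k) * Z" .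
    define c where "c B = \<mu> B / Z" for B
    have "\<forall>B\<in>bases. c B > 0" using \<mu>pos Zpos by (simp add: c_def)
    moreover have "sum c bases = 1" using Zpos by (simp add: c_def Z_def flip: sum_divide_distrib)
    moreover have "p = (\<Sum>B\<in>bases. c B *\<^sub>R indvec B)"
    proof (subst vec_eq_iff, intro allI)
      fix e
      have "(\<Sum>B\<in>bases. c B *\<^sub>R indvec B) $ e = (\<Sum>B\<in>bases. if e \<in> B then \<mu> B else 0) / Z"
        by (simp add: sum_component indvec_def c_def sum_divide_distrib) (intro sum.cong, auto)
      also have "\<dots> = cst / Z" by (simp add: marg)
      also have "\<dots> = real CARD('k) / real CARD('e)"
        using ncst npos Zpos by (simp add: field_simps)
      finally show "p $ e = (\<Sum>B\<in>bases. c B *\<^sub>R indvec B) $ e" by (simp add: p_def)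
    qed
    ultimately show "strictly_uniformly_dense CARD('k) bases" using sud by blast
  qed
qed

end
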